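(* Let $\alpha:[r]\to[m]$ be increasing and $L\in L_m(T_L(\alpha))$. If there exist $n$ and an injective $\beta:[r]\to[n]$ such that $L\,\Pi(\alpha,\beta)=\Pi(\alpha,\beta)$, then $L=I_m$.
   Context: $\mathbb{F}$ is the field with two elements, $[n]=\{1,\dots,n\}$, $e_{n,i}$ standard basis column vectors, $I_m$ identity. For transitive $T\subseteq\{(i,j):i,j\in[m],i>j\}$, $L_m(T)=I_m+\mathrm{span}_{\mathbb{F}}\{e_{m,i}e_{m,j}^{\top}:(i,j)\in T\}$. $T_L(\alpha)=\{(i,j):j\in\mathrm{Im}(\alpha),\ i\in[m],\ i>j\}$. $\Pi(\alpha,\beta)=\sum_{i=1}^re_{m,\alpha(i)}e_{n,\beta(i)}^{\top}$. *)

theory Defs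
  imports "HOL-Library.Z2" "Jordan_Normal_Form.Matrix"
begin

text \<open>The field F with two elements is the type bit (HOL-Library.Z2).
  Mathematical indices are 1-based (as in the paper); Jordan_Normal_Form
  matrix entries are 0-based, so entry (i,j) of the paper is entry (i-1,j-1).\<close>

text \<open>L_m(T) = I_m + span_F { e_{m,i} e_{m,j}^T : (i,j) in T }.  Since T is a finite
  set of positions, an element of the span is a linear combination with
  coefficients c(i,j), i.e. the matrix having entry c(i,j) at (i,j) in T, else 0.\<close>
definition Lm :: "nat \<Rightarrow> (nat \<times> nat) set \<Rightarrow> bit mat set" where
  "Lm m T = {1\<^sub>m m + mat m m (\<lambda>(a, b). if (a + 1, b + 1) \<in> T then c (a + 1, b + 1) else 0)
              | c :: nat \<times> nat \<Rightarrow> bit. True}"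

definition TL :: "nat \<Rightarrow> nat \<Rightarrow> (nat \<Rightarrow> nat) \<Rightarrow> (nat \<times> nat) set" where
  "TL m r \<alpha> = {(i, j). j \<in> \<alpha> ` {1..r} \<and> i \<in> {1..m} \<and> i > j}"

text \<open>Pi(alpha,beta) = sum_{i=1}^r e_{m,alpha(i)} e_{n,beta(i)}^T, an m x n matrix;
  its (a,b) entry is the sum over i of [alpha i = a and beta i = b].\<close>
definition Pi_mat :: "nat \<Rightarrow> nat \<Rightarrow> nat \<Rightarrow> (nat \<Rightarrow> nat) \<Rightarrow> (nat \<Rightarrow> nat) \<Rightarrow> bit mat" where
  "Pi_mat m n r \<alpha> \<beta> = mat m n (\<lambda>(a, b).
      \<Sum>i\<in>{1..r}. if \<alpha> i = a + 1 \<and> \<beta> i = b + 1 then 1 else 0)"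

end

theory Submission
  imports Defs
begin

lemma P_entry:
  assumes k: "k \<in> {1..r}" and inj: "inj_on \<beta> {1..r}" and t: "t < m" and b: "b < n"
    and bk: "b + 1 = \<beta> k"
  shows "Pi_mat m n r \<alpha> \<beta> $$ (t, b) = (if \<alpha> k = t + 1 then 1 else 0)"
proof -
  have "Pi_mat m n r \<alpha> \<beta> $$ (t, b) = (\<Sum>i\<in>{1..r}. if \<alpha> i = t + 1 \<and> \<beta> i = b + 1 then 1 else 0)"
    unfolding Pi_mat_def using t b by simp
  also have "\<dots> = (\<Sum>i\<in>{1..r}. if i = k then (if \<alpha> k = t + 1 then 1 else 0) else (0::bit))"
  proof (rule sum.cong[OF refl])
    fix i assume i: "i \<in> {1..r}"
    show "(if \<alpha> i = t + 1 \<and> \<beta> i = b + 1 then 1 else 0) = (if i = k then (if \<alpha> k = t + 1 then 1 else 0) else (0::bit))"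
    proof (cases "i = k")
      case False
      hence "\<beta> i \<noteq> \<beta> k" using inj_onD[OF inj _ i k] by blast
      thus ?thesis using False bk by simp
    qed (use bk in simp)
  qed
  also have "\<dots> = (if \<alpha> k = t + 1 then 1 else 0)"
    using k by (simp add: sum.delta)
  finally show ?thesis .
qed

theorem lemma6:
  fixes m n r :: nat and \<alpha> \<beta> :: "nat \<Rightarrow> nat" and L :: "bit mat"
  assumes "\<alpha> ` {1..r} \<subseteq> {1..m}"
    and "strict_mono_on {1..r} \<alpha>"
    and "L \<in> Lm m (TL m r \<alpha>)"
    and "\<beta> ` {1..r} \<subseteq> {1..n}"
    and "inj_on \<beta> {1..r}"
    and "L * Pi_mat m n r \<alpha> \<beta> = Pi_mat m n r \<alpha> \<beta>"
  shows "L = 1\<^sub>m m"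
proof -
  define T where "T = TL m r \<alpha>"
  from assms(3) obtain c where Ldef: "L = 1\<^sub>m m + mat m m (\<lambda>(a, b). if (a + 1, b + 1) \<in> T then c (a + 1, b + 1) else 0)"
    unfolding Lm_def T_def by blast
  define g where "g = (\<lambda>(a, b). if (a + 1, b + 1) \<in> T then c (a + 1, b + 1) else (0::bit))"
  have Lij: "L $$ (i, j) = 1\<^sub>m m $$ (i, j) + g (i, j)" if "i < m" "j < m" for i j
    using that unfolding Ldef g_def by simp
  have dimL: "dim_row L = m" "dim_col L = m" unfolding Ldef by auto
  have dimP: "dim_row (Pi_mat m n r \<alpha> \<beta>) = m" "dim_col (Pi_mat m n r \<alpha> \<beta>) = n"
    unfolding Pi_mat_def by auto
  have g0: "g (i, j) = 0" if ij: "i < m" "j < m" for i j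
  proof (cases "(i + 1, j + 1) \<in> T")
    case False thus ?thesis by (simp add: g_def)
  next
    case True
    then obtain k where k: "k \<in> {1..r}" "j + 1 = \<alpha> k" and ij': "i > j"
      unfolding T_def TL_def by auto
    define b where "b = \<beta> k - 1"
    have bk: "\<beta> k \<in> {1..n}" using assms(4) k(1) by blast
    hence b: "b < n" "b + 1 = \<beta> k" unfolding b_def by auto
    have Pe: "\<And>t. t < m \<Longrightarrow> Pi_mat m n r \<alpha> \<beta> $$ (t, b) = (if \<alpha> k = t + 1 then 1 else 0)"
      using P_entry[OF k(1) assms(5) _ b(1) b(2)] by blast
    have "(L * Pi_mat m n r \<alpha> \<beta>) $$ (i, b) = row L i \<bullet> col (Pi_mat m n r \<alpha> \<beta>) b"
      using ij b dimL dimP by (simp only: index_mult_mat)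
    also have "\<dots> = (\<Sum>t\<in>{0..<m}. L $$ (i, t) * Pi_mat m n r \<alpha> \<beta> $$ (t, b))"
      unfolding scalar_prod_def using ij b dimL dimP by (intro sum.cong) auto
    also have "\<dots> = (\<Sum>t\<in>{0..<m}. if t = j then L $$ (i, j) else 0)"
      apply (rule sum.cong[OF refl])
      using Pe k(2) by auto
    also have "\<dots> = L $$ (i, j)" using ij by (simp add: sum.delta)
    also have "\<dots> = g (i, j)" using Lij[OF ij] ij' ij by (simp add: index_one_mat)
    finally have "g (i, j) = Pi_mat m n r \<alpha> \<beta> $$ (i, b)" using assms(6) by simp
    also have "\<dots> = 0" using Pe[OF ij(1)] k(2) ij' by simp
    finally show ?thesis .
  qed
  show ?thesis
  proof (rule eq_matI)
    fix i j assume "i < dim_row (1\<^sub>m m)" "j < dim_col (1\<^sub>m m)"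
    hence ij: "i < m" "j < m" by auto
    show "L $$ (i, j) = 1\<^sub>m m $$ (i, j)" using Lij[OF ij] g0[OF ij] by simp
  qed (use dimL in auto)
qed

end
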